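(* Let $\pi$ be the degree sequence of some tree with boundary, and let $\mathcal{T}_\pi$ be the class of all trees with boundary with degree sequence $\pi$. Then $\mathcal{T}_\pi$ contains an SLO$^\ast$-tree, and any two SLO$^\ast$-trees in $\mathcal{T}_\pi$ are isomorphic.
   Context: A tree with boundary is a finite tree $G=(V,E)$ whose vertex set is partitioned into the set $\partial V$ of boundary vertices, which are exactly the vertices of degree $1$, and the set $V_0$ of interior vertices, which are exactly the vertices of degree at least $2$; both sets are nonempty. Its degree sequence is the multiset of vertex degrees. For a tree with a chosen root $v_0$, the height of $v$ is $h(v)=\mathrm{dist}(v,v_0)$; if $v,w$ are adjacent and $h(w)=h(v)+1$, then $v$ is the parent of $w$ and $w$ a child of $v$. A total order $\prec$ on $V$ is spiral-like (SLO) for root $v_0$ if: (S1) $v\prec w$ implies $h(v)\le h(w)$; (S2) if $v_1\prec v_2$ then every child of $v_1$ precedes every child of $v_2$; (S3) if $v\prec w$ and $v\in\partial V$ then $w\in\partial V$. It is an SLO$^\ast$-ordering if additionally (S4) for interior vertices $v\prec w$ implies $d_v\le d_w$ ($d_v$ the degree). An SLO$^\ast$-tree is a tree with boundary admitting an SLO$^\ast$-ordering for some root. *)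

theory Defs
  imports Main "HOL-Library.Multiset"
begin

definition graph :: "'a set \<Rightarrow> 'a set set \<Rightarrow> bool" where
  "graph V E \<longleftrightarrow> finite V \<and> (\<forall>e\<in>E. e \<subseteq> V \<and> card e = 2)"

definition adj :: "'a set set \<Rightarrow> 'a \<Rightarrow> 'a \<Rightarrow> bool" where
  "adj E x y \<longleftrightarrow> {x, y} \<in> E"

definition deg :: "'a set set \<Rightarrow> 'a \<Rightarrow> nat" where
  "deg E v = card {e \<in> E. v \<in> e}"

definition connected_graph :: "'a set \<Rightarrow> 'a set set \<Rightarrow> bool" where
  "connected_graph V E \<longleftrightarrow> V \<noteq> {} \<and> (\<forall>x\<in>V. \<forall>y\<in>V. (adj E)\<^sup>*\<^sup>* x y)"

definition tree :: "'a set \<Rightarrow> 'a set set \<Rightarrow> bool" where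
  "tree V E \<longleftrightarrow> graph V E \<and> connected_graph V E \<and> card E + 1 = card V"

definition boundary :: "'a set \<Rightarrow> 'a set set \<Rightarrow> 'a set" where
  "boundary V E = {v \<in> V. deg E v = 1}"

definition interior :: "'a set \<Rightarrow> 'a set set \<Rightarrow> 'a set" where
  "interior V E = {v \<in> V. deg E v \<ge> 2}"

definition tree_with_boundary :: "'a set \<Rightarrow> 'a set set \<Rightarrow> bool" where
  "tree_with_boundary V E \<longleftrightarrow> tree V E \<and> V = boundary V E \<union> interior V E
     \<and> boundary V E \<noteq> {} \<and> interior V E \<noteq> {}"

definition degree_sequence :: "'a set \<Rightarrow> 'a set set \<Rightarrow> nat multiset" where
  "degree_sequence V E = image_mset (deg E) (mset_set V)"

definition dist :: "'a set set \<Rightarrow> 'a \<Rightarrow> 'a \<Rightarrow> nat" where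
  "dist E x y = (LEAST n. (adj E ^^ n) x y)"

definition height :: "'a set set \<Rightarrow> 'a \<Rightarrow> 'a \<Rightarrow> nat" where
  "height E v0 v = dist E v0 v"

definition child :: "'a set set \<Rightarrow> 'a \<Rightarrow> 'a \<Rightarrow> 'a \<Rightarrow> bool" where
  "child E v0 v w \<longleftrightarrow> adj E v w \<and> height E v0 w = height E v0 v + 1"

definition strict_total_order_on :: "'a set \<Rightarrow> ('a \<Rightarrow> 'a \<Rightarrow> bool) \<Rightarrow> bool" where
  "strict_total_order_on V prec \<longleftrightarrow>
     (\<forall>x\<in>V. \<not> prec x x) \<and>
     (\<forall>x\<in>V. \<forall>y\<in>V. \<forall>z\<in>V. prec x y \<longrightarrow> prec y z \<longrightarrow> prec x z) \<and>
     (\<forall>x\<in>V. \<forall>y\<in>V. x \<noteq> y \<longrightarrow> prec x y \<or> prec y x)"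

definition SLO :: "'a set \<Rightarrow> 'a set set \<Rightarrow> 'a \<Rightarrow> ('a \<Rightarrow> 'a \<Rightarrow> bool) \<Rightarrow> bool" where
  "SLO V E v0 prec \<longleftrightarrow> v0 \<in> V \<and> strict_total_order_on V prec \<and>
     (\<forall>v\<in>V. \<forall>w\<in>V. prec v w \<longrightarrow> height E v0 v \<le> height E v0 w) \<and>
     (\<forall>v1\<in>V. \<forall>v2\<in>V. prec v1 v2 \<longrightarrow>
        (\<forall>w1\<in>V. \<forall>w2\<in>V. child E v0 v1 w1 \<longrightarrow> child E v0 v2 w2 \<longrightarrow> prec w1 w2)) \<and>
     (\<forall>v\<in>V. \<forall>w\<in>V. prec v w \<longrightarrow> v \<in> boundary V E \<longrightarrow> w \<in> boundary V E)"

definition SLO_star :: "'a set \<Rightarrow> 'a set set \<Rightarrow> 'a \<Rightarrow> ('a \<Rightarrow> 'a \<Rightarrow> bool) \<Rightarrow> bool" where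
  "SLO_star V E v0 prec \<longleftrightarrow> SLO V E v0 prec \<and>
     (\<forall>v\<in>interior V E. \<forall>w\<in>interior V E. prec v w \<longrightarrow> deg E v \<le> deg E w)"

definition SLO_star_tree :: "'a set \<Rightarrow> 'a set set \<Rightarrow> bool" where
  "SLO_star_tree V E \<longleftrightarrow> tree_with_boundary V E \<and> (\<exists>v0 prec. SLO_star V E v0 prec)"

definition graph_iso :: "'a set \<Rightarrow> 'a set set \<Rightarrow> 'b set \<Rightarrow> 'b set set \<Rightarrow> bool" where
  "graph_iso V1 E1 V2 E2 \<longleftrightarrow> (\<exists>f. bij_betw f V1 V2 \<and>
     (\<forall>x\<in>V1. \<forall>y\<in>V1. {x, y} \<in> E1 \<longleftrightarrow> {f x, f y} \<in> E2))"

end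

theory Submission
  imports Defs "HOL-Library.Product_Lexorder"
begin


lemma adj_sym: "adj E x y = adj E y x" by (simp add: adj_def insert_commute)

lemma adj_in: "graph V E \<Longrightarrow> adj E x y \<Longrightarrow> x \<in> V \<and> y \<in> V \<and> x \<noteq> y"
  unfolding graph_def adj_def by (cases "x = y") auto

lemma walk_bound:
  assumes edge: "\<And>x y. adj E x y \<Longrightarrow> g y \<le> g x + 1"
  shows "(adj E ^^ k) a b \<Longrightarrow> g b \<le> g a + k"
proof (induction k arbitrary: b)
  case 0 then show ?case by simp
next
  case (Suc k)
  from Suc.prems obtain c where "(adj E ^^ k) a c" "adj E c b" by (rule relpowp_Suc_E)
  with Suc.IH edge[of c b] show ?case by fastforce
qed

lemma height_eq:
  assumes g: "graph V E" and v0: "v0 \<in> V" and g0: "g v0 = 0"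
  and edge: "\<And>x y. adj E x y \<Longrightarrow> g y \<le> g x + 1"
  and down: "\<And>v. v \<in> V \<Longrightarrow> v \<noteq> v0 \<Longrightarrow> \<exists>u. adj E u v \<and> g v = g u + 1"
  and v: "v \<in> V"
  shows "height E v0 v = g v"
proof -
  have walk: "\<forall>v\<in>V. g v = k \<longrightarrow> (adj E ^^ k) v0 v" for k
  proof (induction k)
    case 0
    then show ?case using down by fastforce
  next
    case (Suc k)
    show ?case
    proof (intro ballI impI)
      fix v assume "v \<in> V" "g v = Suc k"
      then have "v \<noteq> v0" using g0 by auto
      then obtain u where u: "adj E u v" "g v = g u + 1" using down \<open>v \<in> V\<close> by blast
      then have "u \<in> V" using adj_in[OF g] by blast
      with Suc.IH u \<open>g v = Suc k\<close> have "(adj E ^^ k) v0 u" by auto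
      then show "(adj E ^^ Suc k) v0 v" using u(1) by (rule relpowp_Suc_I)
    qed
  qed
  show ?thesis unfolding height_def dist_def
  proof (rule Least_equality)
    show "(adj E ^^ g v) v0 v" using walk v by blast
    fix n assume "(adj E ^^ n) v0 v"
    then have "g v \<le> g v0 + n" using walk_bound[of E g n v0 v] edge by blast
    with g0 show "g v \<le> n" by simp
  qed
qed

context
  fixes V :: "'a set" and E :: "'a set set" and v0 :: 'a
  assumes T: "tree V E" and v0: "v0 \<in> V"
begin

abbreviation "ht \<equiv> height E v0"

lemma gr: "graph V E" using T unfolding tree_def by blast

lemma T1: "v \<in> V \<Longrightarrow> (adj E ^^ ht v) v0 v"
proof -
  assume "v \<in> V"
  with T v0 have "(adj E)\<^sup>*\<^sup>* v0 v" unfolding tree_def connected_graph_def by blast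
  then obtain n where "(adj E ^^ n) v0 v" using rtranclp_power by metis
  then show ?thesis unfolding height_def dist_def by (rule LeastI)
qed

lemma ht_le: "(adj E ^^ n) v0 v \<Longrightarrow> ht v \<le> n"
  unfolding height_def dist_def by (rule Least_le)

lemma T2: "adj E x y \<Longrightarrow> ht y \<le> ht x + 1"
proof -
  assume a: "adj E x y"
  then have "x \<in> V" using adj_in[OF gr] by blast
  from relpowp_Suc_I[OF T1[OF this] a] show ?thesis using ht_le by fastforce
qed

lemma ht0: "ht v0 = 0" using ht_le[of 0 v0] by simp

lemma T3: "v \<in> V \<Longrightarrow> ht v = 0 \<longleftrightarrow> v = v0"
  using T1[of v] ht0 by auto

lemma child_ht: "child E v0 x y \<Longrightarrow> ht y = ht x + 1"
  unfolding child_def by simp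

lemma child_in: "child E v0 x y \<Longrightarrow> x \<in> V \<and> y \<in> V \<and> y \<noteq> v0"
  unfolding child_def using adj_in[OF gr] T3 by force

lemma T4: "v \<in> V \<Longrightarrow> v \<noteq> v0 \<Longrightarrow> \<exists>u. child E v0 u v"
proof -
  assume v: "v \<in> V" "v \<noteq> v0"
  then obtain k where k: "ht v = Suc k" using T3 not0_implies_Suc by blast
  with T1[OF v(1)] obtain u where u: "(adj E ^^ k) v0 u" "adj E u v"
    by (metis relpowp_Suc_E)
  have "ht u \<le> k" using ht_le[OF u(1)] .
  moreover have "ht v \<le> ht u + 1" using T2[OF u(2)] .
  ultimately have "ht v = ht u + 1" using k by simp
  then show ?thesis using u(2) unfolding child_def by blast
qed

definition par where "par w = (SOME u. child E v0 u w)"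

lemma par_child: "w \<in> V \<Longrightarrow> w \<noteq> v0 \<Longrightarrow> child E v0 (par w) w"
  unfolding par_def using T4 by (metis someI_ex)

lemma dbl_child: "child E v0 x y \<Longrightarrow> child E v0 a b \<Longrightarrow> {x, y} = {a, b} \<Longrightarrow> x = a \<and> y = b"
  using child_ht[of x y] child_ht[of a b] by (auto simp: doubleton_eq_iff)

lemma E_image: "E = (\<lambda>w. {par w, w}) ` (V - {v0})"
proof -
  have fin: "finite V" using gr unfolding graph_def by blast
  have finE: "finite E" 
    by (rule finite_subset[of _ "Pow V"]) (use gr fin in \<open>auto simp: graph_def\<close>)
  have inj: "inj_on (\<lambda>w. {par w, w}) (V - {v0})"
    by (rule inj_onI) (use dbl_child par_child in blast)
  have sub: "(\<lambda>w. {par w, w}) ` (V - {v0}) \<subseteq> E"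
    using par_child unfolding child_def adj_def by blast
  have "card E + 1 = card V" using T unfolding tree_def by blast
  then have "card ((\<lambda>w. {par w, w}) ` (V - {v0})) = card E"
    using card_image[OF inj] v0 fin by simp
  then show ?thesis using card_subset_eq[OF finE sub] by simp
qed

lemma par_unique: "child E v0 x y \<Longrightarrow> y \<noteq> v0 \<and> x = par y"
proof -
  assume c: "child E v0 x y"
  then have "{x, y} \<in> E" unfolding child_def adj_def by blast
  then obtain a where a: "a \<in> V - {v0}" "{x,y} = {par a, a}" using E_image by blast
  from dbl_child[OF c par_child a(2)] a(1) show ?thesis by auto
qed

lemma edge_iff: "{x, y} \<in> E \<longleftrightarrow> child E v0 x y \<or> child E v0 y x"
proof
  assume "{x, y} \<in> E"
  then obtain a where a: "a \<in> V - {v0}" "{x,y} = {par a, a}" using E_image by blast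
  from a(2) have "(x = par a \<and> y = a) \<or> (x = a \<and> y = par a)" by (simp add: doubleton_eq_iff)
  then show "child E v0 x y \<or> child E v0 y x" using par_child[of a] a(1) by blast
next
  assume "child E v0 x y \<or> child E v0 y x"
  then show "{x, y} \<in> E" unfolding child_def adj_def by (metis insert_commute)
qed

lemma deg_eq: "v \<in> V \<Longrightarrow> deg E v = card {w \<in> V - {v0}. par w = v} + (if v = v0 then 0 else 1)"
proof -
  assume v: "v \<in> V"
  have fin: "finite V" using gr unfolding graph_def by blast
  have inj: "inj_on (\<lambda>w. {par w, w}) (V - {v0})"
    by (rule inj_onI) (use dbl_child par_child in blast)
  let ?S = "{w \<in> V - {v0}. par w = v \<or> w = v}"
  have inj2: "inj_on (\<lambda>w. {par w, w}) ?S" by (rule inj_on_subset[OF inj]) auto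
  have "{e \<in> E. v \<in> e} = (\<lambda>w. {par w, w}) ` ?S"
  proof (rule set_eqI, rule iffI)
    fix e assume "e \<in> {e \<in> E. v \<in> e}"
    then have "e \<in> (\<lambda>w. {par w, w}) ` (V - {v0})" "v \<in> e" using E_image by auto
    then show "e \<in> (\<lambda>w. {par w, w}) ` ?S" by auto
  next
    fix e assume "e \<in> (\<lambda>w. {par w, w}) ` ?S"
    then have "e \<in> (\<lambda>w. {par w, w}) ` (V - {v0})" "v \<in> e" by auto
    then show "e \<in> {e \<in> E. v \<in> e}" using E_image by auto
  qed
  then have "deg E v = card ?S"
    unfolding deg_def using card_image[OF inj2] by simp
  also have "{w \<in> V - {v0}. par w = v \<or> w = v} = {w \<in> V - {v0}. par w = v} \<union> (if v = v0 then {} else {v})"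
    using v by auto
  also have "card \<dots> = card {w \<in> V - {v0}. par w = v} + (if v = v0 then 0 else 1)"
  proof -
    have "v \<noteq> v0 \<Longrightarrow> par v \<noteq> v" using par_child[of v] child_ht v by fastforce
    then show ?thesis using fin by (auto simp: card_insert_if)
  qed
  finally show ?thesis .
qed

lemma children_eq: "{w \<in> V. child E v0 v w} = {w \<in> V - {v0}. par w = v}"
  using par_unique par_child by blast

end



lemma rank_props:
  assumes fin: "finite V" and so: "strict_total_order_on V prec"
  shows "\<forall>u\<in>V. \<forall>v\<in>V. prec u v \<longleftrightarrow> card {w\<in>V. prec w u} < card {w\<in>V. prec w v}"
    and "bij_betw (\<lambda>v. card {w\<in>V. prec w v}) V {0..<card V}"
proof -
  let ?r = "\<lambda>v. card {w\<in>V. prec w v}"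
  have irr: "\<And>x. x \<in> V \<Longrightarrow> \<not> prec x x" and tr: "\<And>x y z. x\<in>V \<Longrightarrow> y\<in>V \<Longrightarrow> z\<in>V \<Longrightarrow> prec x y \<Longrightarrow> prec y z \<Longrightarrow> prec x z"
    and tot: "\<And>x y. x\<in>V \<Longrightarrow> y\<in>V \<Longrightarrow> x \<noteq> y \<Longrightarrow> prec x y \<or> prec y x"
    using so unfolding strict_total_order_on_def by blast+
  have lt: "?r u < ?r v" if "u \<in> V" "v \<in> V" "prec u v" for u v
  proof -
    have "{w\<in>V. prec w u} \<subset> {w\<in>V. prec w v}"
      using that irr tr by blast
    then show ?thesis using fin by (intro psubset_card_mono) auto
  qed
  have asym: "\<not> prec v u" if "u \<in> V" "v \<in> V" "prec u v" for u v
    using that lt[of u v] lt[of v u] by auto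
  show A: "\<forall>u\<in>V. \<forall>v\<in>V. prec u v \<longleftrightarrow> ?r u < ?r v"
  proof (intro ballI iffI)
    fix u v assume "u \<in> V" "v \<in> V" "?r u < ?r v"
    then show "prec u v" using tot[of u v] lt[of v u] by (cases "u = v") auto
  qed (use lt in blast)
  have inj: "inj_on ?r V"
  proof (rule inj_onI)
    fix u v assume "u \<in> V" "v \<in> V" "?r u = ?r v"
    then show "u = v" using tot[of u v] lt[of u v] lt[of v u] by (cases "u = v") auto
  qed
  have sub: "?r ` V \<subseteq> {0..<card V}"
  proof
    fix x assume "x \<in> ?r ` V"
    then obtain v where v: "v \<in> V" "x = ?r v" by blast
    have "{w\<in>V. prec w v} \<subseteq> V - {v}" using irr v by blast
    then have "?r v \<le> card (V - {v})" using fin by (intro card_mono) auto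
    also have "\<dots> < card V" using fin v by (meson card_Diff1_less)
    finally show "x \<in> {0..<card V}" using v by simp
  qed
  have "card (?r ` V) = card {0..<card V}" using card_image[OF inj] by simp
  then have "?r ` V = {0..<card V}" using card_subset_eq[OF _ sub] by simp
  then show "bij_betw ?r V {0..<card V}" using inj unfolding bij_betw_def by blast
qed

definition key :: "nat \<Rightarrow> bool \<times> nat" where "key d = (d < 2, d)"

definition slist :: "nat multiset \<Rightarrow> nat list" where
  "slist \<pi> = sort_key key (sorted_list_of_multiset \<pi>)"

definition cc :: "nat list \<Rightarrow> nat \<Rightarrow> nat" where
  "cc s i = (if i < length s then (if i = 0 then s!0 else s!i - 1) else 0)"

definition KK :: "nat list \<Rightarrow> nat \<Rightarrow> nat" where
  "KK s i = (\<Sum>j<i. cc s j)"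

definition PP :: "nat list \<Rightarrow> nat \<Rightarrow> nat" where
  "PP s m = (LEAST i. m \<le> KK s (Suc i))"

lemma slist_eq: "mset D = \<pi> \<Longrightarrow> sorted (map key D) \<Longrightarrow> slist \<pi> = D"
  unfolding slist_def
  by (rule sort_key_inj_key_eq) (auto simp: inj_on_def key_def)

lemma slist_props: "mset (slist \<pi>) = \<pi>" "sorted (map key (slist \<pi>))"
  unfolding slist_def by auto

lemma KK_Suc: "KK s (Suc i) = KK s i + cc s i"
  unfolding KK_def by simp

lemma KK_mono: "i \<le> j \<Longrightarrow> KK s i \<le> KK s j"
  unfolding KK_def by (rule sum_mono2) auto

lemma handshake:
  assumes g: "graph V E"
  shows "(\<Sum>v\<in>V. deg E v) = 2 * card E"
proof -
  have fin: "finite V" using g unfolding graph_def by blast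
  have finE: "finite E"
    by (rule finite_subset[of _ "Pow V"]) (use g fin in \<open>auto simp: graph_def\<close>)
  have d: "deg E v = (\<Sum>e\<in>E. if v \<in> e then 1 else 0)" for v
  proof -
    have "deg E v = (\<Sum>e\<in>{e\<in>E. v \<in> e}. 1)" unfolding deg_def by simp
    also have "\<dots> = (\<Sum>e\<in>E. if v \<in> e then 1 else 0)" by (rule sum.inter_filter[OF finE])
    finally show ?thesis .
  qed
  have "(\<Sum>v\<in>V. deg E v) = (\<Sum>v\<in>V. \<Sum>e\<in>E. if v \<in> e then 1 else 0)"
    using d by simp
  also have "\<dots> = (\<Sum>e\<in>E. \<Sum>v\<in>V. if v \<in> e then 1 else 0)" by (rule sum.swap)
  also have "\<dots> = (\<Sum>e\<in>E. 2)"
  proof (rule sum.cong)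
    fix e assume "e \<in> E"
    then have e: "e \<subseteq> V" "card e = 2" using g unfolding graph_def by blast+
    have "(\<Sum>v\<in>V. if v \<in> e then 1 else 0) = (\<Sum>v\<in>{v\<in>V. v \<in> e}. 1::nat)"
      by (rule sum.inter_filter[OF fin, symmetric])
    also have "{v\<in>V. v \<in> e} = e" using e by blast
    finally show "(\<Sum>v\<in>V. if v \<in> e then 1 else 0) = (2::nat)" using e by simp
  qed simp
  finally show ?thesis by simp
qed

function Hf :: "(nat \<Rightarrow> nat) \<Rightarrow> nat \<Rightarrow> nat" where
  "Hf p m = (if m = 0 then 0 else if p m < m then Hf p (p m) + 1 else 0)"
  by pat_completeness auto
termination by (relation "measure (\<lambda>(p, m). m)") auto

declare Hf.simps[simp del]



lemma uniq_main:
  assumes TB: "tree_with_boundary V E" and SL: "SLO_star V E v0 prec"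
  shows "\<exists>r. bij_betw r V {0..<card V} \<and> (\<forall>x\<in>V. \<forall>y\<in>V. {x,y} \<in> E \<longleftrightarrow>
            (r y \<noteq> 0 \<and> r x = PP (slist (degree_sequence V E)) (r y)) \<or>
            (r x \<noteq> 0 \<and> r y = PP (slist (degree_sequence V E)) (r x)))"
proof -
  have T: "tree V E" using TB unfolding tree_with_boundary_def by blast
  have v0: "v0 \<in> V" and so: "strict_total_order_on V prec"
    and S1: "\<And>v w. v\<in>V \<Longrightarrow> w\<in>V \<Longrightarrow> prec v w \<Longrightarrow> height E v0 v \<le> height E v0 w"
    and S2: "\<And>v1 v2 w1 w2. v1\<in>V \<Longrightarrow> v2\<in>V \<Longrightarrow> prec v1 v2 \<Longrightarrow> w1\<in>V \<Longrightarrow> w2\<in>V \<Longrightarrow>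
               child E v0 v1 w1 \<Longrightarrow> child E v0 v2 w2 \<Longrightarrow> prec w1 w2"
    and S3: "\<And>v w. v\<in>V \<Longrightarrow> w\<in>V \<Longrightarrow> prec v w \<Longrightarrow> v \<in> boundary V E \<Longrightarrow> w \<in> boundary V E"
    and S4: "\<And>v w. v\<in>interior V E \<Longrightarrow> w\<in>interior V E \<Longrightarrow> prec v w \<Longrightarrow> deg E v \<le> deg E w"
    using SL unfolding SLO_star_def SLO_def by blast+
  have irr: "\<And>x. x \<in> V \<Longrightarrow> \<not> prec x x" using so unfolding strict_total_order_on_def by blast
  have fin: "finite V" using T unfolding tree_def graph_def by blast
  define n where "n = card V"
  define r where "r = (\<lambda>v. card {w\<in>V. prec w v})"
  have rlt: "\<And>u v. u\<in>V \<Longrightarrow> v\<in>V \<Longrightarrow> prec u v \<longleftrightarrow> r u < r v"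
    using rank_props(1)[OF fin so] unfolding r_def by blast
  have bij: "bij_betw r V {0..<n}" using rank_props(2)[OF fin so] unfolding r_def n_def by blast
  have injr: "inj_on r V" using bij bij_betw_def by blast
  define h where "h = inv_into V r"
  have bijh: "bij_betw h {0..<n} V" unfolding h_def by (rule bij_betw_inv_into[OF bij])
  have hV: "\<And>i. i < n \<Longrightarrow> h i \<in> V" using bijh bij_betwE by fastforce
  have rh: "\<And>i. i < n \<Longrightarrow> r (h i) = i" unfolding h_def using bij_betw_inv_into_right[OF bij] by simp
  have hr: "\<And>v. v \<in> V \<Longrightarrow> h (r v) = v" unfolding h_def using injr by simp
  have rV: "\<And>v. v \<in> V \<Longrightarrow> r v < n" using bij bij_betwE by fastforce
  have degc: "\<And>v. v \<in> V \<Longrightarrow> deg E v = 1 \<or> deg E v \<ge> 2"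
    using TB unfolding tree_with_boundary_def boundary_def interior_def by blast
  have r0: "r v0 = 0"
  proof -
    have "{w\<in>V. prec w v0} = {}"
    proof (rule ccontr)
      assume "{w\<in>V. prec w v0} \<noteq> {}"
      then obtain w where w: "w \<in> V" "prec w v0" by blast
      then have "height E v0 w \<le> 0" using S1[OF w(1) v0] ht0[OF T v0] by simp
      then have "w = v0" using T3[OF T v0 w(1)] by simp
      then show False using w irr by blast
    qed
    then show ?thesis unfolding r_def by (metis card.empty)
  qed
  have rv0: "\<And>v. v \<in> V \<Longrightarrow> r v = 0 \<longleftrightarrow> v = v0"
    using r0 injr v0 by (metis inj_on_def)
  define s where "s = slist (degree_sequence V E)"
  define D where "D = map (\<lambda>i. deg E (h i)) [0..<n]"
  have Vh: "V = h ` {0..<n}" using bijh bij_betw_imp_surj_on by metis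
  have injh: "inj_on h {0..<n}" using bijh bij_betw_def by blast
  have msetD: "mset D = degree_sequence V E"
  proof -
    have "degree_sequence V E = image_mset (deg E) (image_mset h (mset_set {0..<n}))"
      unfolding degree_sequence_def Vh image_mset_mset_set[OF injh] ..
    then show ?thesis unfolding D_def by (simp add: multiset.map_comp o_def)
  qed
  have sortedD: "sorted (map key D)"
    unfolding sorted_iff_nth_mono_less
  proof (intro allI impI)
    fix i j assume ij: "i < j" "j < length (map key D)"
    then have ij': "i < n" "j < n" unfolding D_def by auto
    have pr: "prec (h i) (h j)" using rlt[OF hV[OF ij'(1)] hV[OF ij'(2)]] rh ij' ij by simp
    have "key (deg E (h i)) \<le> key (deg E (h j))"
    proof (cases "deg E (h i) = 1")
      case True
      then have "h i \<in> boundary V E" using hV ij' unfolding boundary_def by blast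
      then have "h j \<in> boundary V E" using S3[OF hV[OF ij'(1)] hV[OF ij'(2)] pr] by blast
      then show ?thesis using True unfolding boundary_def by simp
    next
      case False
      then have di: "deg E (h i) \<ge> 2" using degc hV ij' by blast
      show ?thesis
      proof (cases "deg E (h j) = 1")
        case True then show ?thesis using di by (simp add: key_def less_eq_prod_def)
      next
        case False
        then have "deg E (h j) \<ge> 2" using degc hV ij' by blast
        then have "deg E (h i) \<le> deg E (h j)" using S4[OF _ _ pr] di hV ij' unfolding interior_def by blast
        then show ?thesis using di by (simp add: key_def less_eq_prod_def)
      qed
    qed
    then show "map key D ! i \<le> map key D ! j" using ij' unfolding D_def by simp
  qed
  have sD: "s = D" unfolding s_def by (rule slist_eq[OF msetD sortedD])
  have lens: "length s = n" using sD D_def by simp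
  have sdeg: "\<And>i. i < n \<Longrightarrow> s ! i = deg E (h i)" using sD D_def by simp
  let ?p = "par E v0"
  have child_card: "\<And>v. v \<in> V \<Longrightarrow> card {w\<in>V-{v0}. ?p w = v} = cc s (r v)"
  proof -
    fix v assume v: "v \<in> V"
    have de: "deg E v = card {w\<in>V-{v0}. ?p w = v} + (if v = v0 then 0 else 1)"
      by (rule deg_eq[OF T v0 v])
    have "s ! r v = deg E v" using sdeg[OF rV[OF v]] hr[OF v] by simp
    then show "card {w\<in>V-{v0}. ?p w = v} = cc s (r v)"
      using de rv0[OF v] rV[OF v] lens unfolding cc_def by auto
  qed
  define pidx where "pidx m = r (?p (h m))" for m
  have pp: "\<And>m. 1 \<le> m \<Longrightarrow> m < n \<Longrightarrow> h m \<noteq> v0 \<and> ?p (h m) \<in> V \<and> child E v0 (?p (h m)) (h m) \<and> pidx m < n"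
  proof -
    fix m assume m: "1 \<le> m" "m < n"
    then have "h m \<noteq> v0" using rv0[OF hV[OF m(2)]] rh[OF m(2)] by auto
    moreover have c: "child E v0 (?p (h m)) (h m)" using par_child[OF T v0 hV[OF m(2)] \<open>h m \<noteq> v0\<close>] .
    moreover have "?p (h m) \<in> V" using child_in[OF T v0 c] by blast
    ultimately show "h m \<noteq> v0 \<and> ?p (h m) \<in> V \<and> child E v0 (?p (h m)) (h m) \<and> pidx m < n"
      using rV pidx_def by auto
  qed
  have cardF: "card {m\<in>{1..<n}. pidx m = i} = cc s i" for i
  proof (cases "i < n")
    case True
    have "{m\<in>{1..<n}. pidx m = i} = r ` {w\<in>V-{v0}. ?p w = h i}"
    proof (rule set_eqI, rule iffI)
      fix m assume "m \<in> {m\<in>{1..<n}. pidx m = i}"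
      then have m: "1 \<le> m" "m < n" "pidx m = i" by auto
      have "?p (h m) = h i" using m pp[OF m(1,2)] hV[OF True] rh[OF True] injr
        unfolding pidx_def by (metis inj_on_def)
      then show "m \<in> r ` {w\<in>V-{v0}. ?p w = h i}" using pp[OF m(1,2)] hV[OF m(2)] rh[OF m(2)]
        by (metis (mono_tags, lifting) DiffI image_eqI mem_Collect_eq singletonD)
    next
      fix m assume "m \<in> r ` {w\<in>V-{v0}. ?p w = h i}"
      then obtain w where w: "w \<in> V" "w \<noteq> v0" "?p w = h i" "m = r w" by blast
      then have "r w \<noteq> 0" using rv0 by blast
      then have "1 \<le> m" "m < n" using rV w by auto
      moreover have "pidx m = i" unfolding pidx_def using w hr rh[OF True] by simp
      ultimately show "m \<in> {m\<in>{1..<n}. pidx m = i}" by simp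
    qed
    moreover have "inj_on r {w\<in>V-{v0}. ?p w = h i}" by (rule inj_on_subset[OF injr]) auto
    ultimately have "card {m\<in>{1..<n}. pidx m = i} = card {w\<in>V-{v0}. ?p w = h i}"
      by (simp add: card_image)
    then show ?thesis using child_card[OF hV[OF True]] rh[OF True] by simp
  next
    case False
    then have "{m\<in>{1..<n}. pidx m = i} = {}" using pp by fastforce
    then show ?thesis using False lens unfolding cc_def by simp
  qed
  have mono: "\<And>m m'. 1 \<le> m \<Longrightarrow> m \<le> m' \<Longrightarrow> m' < n \<Longrightarrow> pidx m \<le> pidx m'"
  proof (rule ccontr)
    fix m m' assume m: "1 \<le> m" "m \<le> m'" "m' < n" and "\<not> pidx m \<le> pidx m'"
    then have lt: "pidx m' < pidx m" by simp
    have m1: "1 \<le> m'" "m < n" using m by auto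
    have "prec (?p (h m')) (?p (h m))" using rlt pp[OF m1(1) m(3)] pp[OF m(1) m1(2)] lt unfolding pidx_def by blast
    then have "prec (h m') (h m)" using S2 pp[OF m1(1) m(3)] pp[OF m(1) m1(2)] hV m1 m by blast
    then have "m' < m" using rlt[OF hV[OF m(3)] hV[OF m1(2)]] rh[OF m(3)] rh[OF m1(2)] by simp
    then show False using m by simp
  qed
  have cardA: "card {m\<in>{1..<n}. pidx m \<le> i} = KK s (Suc i)" for i
  proof (induction i)
    case 0
    then show ?case using cardF[of 0] by (simp add: KK_def)
  next
    case (Suc i)
    have "{m\<in>{1..<n}. pidx m \<le> Suc i} = {m\<in>{1..<n}. pidx m \<le> i} \<union> {m\<in>{1..<n}. pidx m = Suc i}"
      by auto
    then have "card {m\<in>{1..<n}. pidx m \<le> Suc i} = card {m\<in>{1..<n}. pidx m \<le> i} + card {m\<in>{1..<n}. pidx m = Suc i}"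
      by (simp add: card_Un_disjoint disjoint_iff)
    then show ?case using Suc cardF[of "Suc i"] KK_Suc[of s "Suc i"] by simp
  qed
  have char: "\<And>m i. 1 \<le> m \<Longrightarrow> m < n \<Longrightarrow> pidx m \<le> i \<longleftrightarrow> m \<le> KK s (Suc i)"
  proof
    fix m i assume m: "1 \<le> m" "m < n" "pidx m \<le> i"
    have "{1..m} \<subseteq> {m\<in>{1..<n}. pidx m \<le> i}" using mono m by fastforce
    then have "card {1..m} \<le> card {m\<in>{1..<n}. pidx m \<le> i}" by (intro card_mono) auto
    then show "m \<le> KK s (Suc i)" using cardA by simp
  next
    fix m i assume m: "1 \<le> m" "m < n" "m \<le> KK s (Suc i)"
    show "pidx m \<le> i"
    proof (rule ccontr)
      assume "\<not> pidx m \<le> i"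
      have "{m\<in>{1..<n}. pidx m \<le> i} \<subseteq> {1..<m}"
      proof
        fix a assume a: "a \<in> {m\<in>{1..<n}. pidx m \<le> i}"
        show "a \<in> {1..<m}"
        proof (rule ccontr)
          assume "a \<notin> {1..<m}"
          then have "m \<le> a" using a by auto
          then have "pidx m \<le> pidx a" using mono[OF m(1)] a by auto
          then show False using a \<open>\<not> pidx m \<le> i\<close> by auto
        qed
      qed
      then have "card {m\<in>{1..<n}. pidx m \<le> i} \<le> card {1..<m}" by (intro card_mono) auto
      then show False using cardA m by simp
    qed
  qed
  have PPeq: "\<And>m. 1 \<le> m \<Longrightarrow> m < n \<Longrightarrow> PP s m = pidx m"
  proof -
    fix m assume m: "1 \<le> m" "m < n"
    show "PP s m = pidx m" unfolding PP_def
    proof (rule Least_equality)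
      show "m \<le> KK s (Suc (pidx m))" using char[OF m, of "pidx m"] by simp
      fix y assume "m \<le> KK s (Suc y)"
      then show "pidx m \<le> y" using char[OF m] by simp
    qed
  qed
  have cd1: "r y \<noteq> 0 \<and> r x = PP s (r y)" if xy: "x \<in> V" "y \<in> V" and c: "child E v0 x y" for x y
  proof -
    have ny: "y \<noteq> v0" and xp: "x = ?p y" using par_unique[OF T v0 c] by auto
    have ry: "r y \<noteq> 0" using rv0[OF xy(2)] ny by simp
    then have r1: "1 \<le> r y" by simp
    have "PP s (r y) = pidx (r y)" using PPeq[OF r1 rV[OF xy(2)]] .
    also have "\<dots> = r x" unfolding pidx_def using hr[OF xy(2)] xp by simp
    finally show ?thesis using ry by simp
  qed
  have cd2: "child E v0 x y" if xy: "x \<in> V" "y \<in> V" and c: "r y \<noteq> 0" "r x = PP s (r y)" for x y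
  proof -
    have ny: "y \<noteq> v0" using rv0[OF xy(2)] c(1) by simp
    have r1: "1 \<le> r y" using c(1) by simp
    have "r x = pidx (r y)" using PPeq[OF r1 rV[OF xy(2)]] c(2) by simp
    then have rx: "r x = r (?p y)" unfolding pidx_def using hr[OF xy(2)] by simp
    have pc: "child E v0 (?p y) y" using par_child[OF T v0 xy(2) ny] .
    have "?p y \<in> V" using child_in[OF T v0 pc] by blast
    then have "x = ?p y" using injr xy(1) rx unfolding inj_on_def by blast
    then show ?thesis using pc by simp
  qed
  have childiff: "child E v0 x y \<longleftrightarrow> (r y \<noteq> 0 \<and> r x = PP s (r y))" if xy: "x \<in> V" "y \<in> V" for x y
    using cd1[OF xy] cd2[OF xy] by blast
  show ?thesis
  proof (intro exI conjI ballI)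
    show "bij_betw r V {0..<card V}" using bij n_def by simp
    fix x y assume xy: "x \<in> V" "y \<in> V"
    show "{x,y} \<in> E \<longleftrightarrow> (r y \<noteq> 0 \<and> r x = PP (slist (degree_sequence V E)) (r y)) \<or>
            (r x \<noteq> 0 \<and> r y = PP (slist (degree_sequence V E)) (r x))"
      unfolding s_def[symmetric] using edge_iff[OF T v0, of x y] childiff[OF xy] childiff[OF xy(2,1)] by blast
  qed
qed



locale seqs =
  fixes s :: "nat list" and n :: nat
  assumes lens: "length s = n" and srt: "sorted (map key s)" and ge1: "\<And>i. i < n \<Longrightarrow> s!i \<ge> 1"
    and has1: "\<exists>i<n. s!i = 1" and has2: "\<exists>i<n. s!i \<ge> 2" and sumS: "(\<Sum>i<n. s!i) = 2*(n-1)"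
begin

lemma keyle: "i \<le> k \<Longrightarrow> k < n \<Longrightarrow> key (s!i) \<le> key (s!k)"
  using srt lens unfolding sorted_iff_nth_mono by auto

lemma npos: "n \<ge> 1" using has1 by auto

lemma s0: "s!0 \<ge> 2"
proof -
  obtain i where i: "i < n" "s!i \<ge> 2" using has2 by blast
  have "key (s!0) \<le> key (s!i)" using keyle i by simp
  then show ?thesis using i by (auto simp: key_def less_eq_prod_def)
qed

definition "jj = (LEAST j. j < n \<and> s!j = 1)"

lemma jj: "jj < n" "s!jj = 1"
  using LeastI_ex[OF has1] unfolding jj_def by auto

lemma jj1: "jj \<ge> 1" using jj s0 by (cases "jj = 0") auto

lemma below_jj: "l < jj \<Longrightarrow> s!l \<ge> 2"
proof -
  assume l: "l < jj"
  then have "\<not> (l < n \<and> s!l = 1)" unfolding jj_def using not_less_Least by blast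
  then show ?thesis using ge1[of l] l jj by auto
qed

lemma above_jj: "jj \<le> l \<Longrightarrow> l < n \<Longrightarrow> s!l = 1"
proof -
  assume l: "jj \<le> l" "l < n"
  have "key (s!jj) \<le> key (s!l)" using keyle l by simp
  then show ?thesis using jj ge1[of l] l by (auto simp: key_def less_eq_prod_def)
qed

lemma cc0: "jj \<le> l \<Longrightarrow> cc s l = 0"
  using above_jj lens jj1 unfolding cc_def by auto

lemma ccsum: "k < n \<Longrightarrow> (\<Sum>l<Suc k. cc s l) + k = (\<Sum>l<Suc k. s!l)"
proof (induction k)
  case 0 then show ?case using lens unfolding cc_def by simp
next
  case (Suc k)
  have "cc s (Suc k) + 1 = s!(Suc k)" using ge1[of "Suc k"] Suc.prems lens unfolding cc_def by simp
  then show ?case using Suc by simp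
qed

lemma KKn: "KK s n = n - 1"
proof -
  obtain k where k: "n = Suc k" using npos by (cases n) auto
  have "(\<Sum>l<n. cc s l) + (n - 1) = 2 * (n - 1)" using ccsum[of k] k sumS by simp
  then show ?thesis unfolding KK_def by simp
qed

lemma KKjj: "jj \<le> i \<Longrightarrow> KK s i = KK s jj"
proof (induction i rule: nat_induct_at_least)
  case base then show ?case by simp
next
  case (Suc i) then show ?case using KK_Suc[of s i] cc0[of i] by simp
qed

lemma KKhigh: "jj \<le> i \<Longrightarrow> KK s i = n - 1"
  using KKjj KKn jj by (metis less_imp_le)

lemma KKlow: "l < jj \<Longrightarrow> KK s (Suc l) \<ge> l + 2"
proof (induction l)
  case 0 then show ?case using s0 lens npos unfolding KK_def cc_def by simp
next
  case (Suc l)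
  have "cc s (Suc l) \<ge> 1" using below_jj[OF Suc.prems] Suc.prems jj lens unfolding cc_def by auto
  then show ?case using Suc KK_Suc[of s "Suc l"] by simp
qed

lemma KKle: "KK s i \<le> n - 1"
  using KK_mono[of i "max i jj" s] KKhigh[of "max i jj"] by simp

lemma PPle: "m < n \<Longrightarrow> PP s m \<le> i \<longleftrightarrow> m \<le> KK s (Suc i)"
proof
  assume m: "m < n"
  have ex: "m \<le> KK s (Suc n)" using KKhigh[of "Suc n"] jj m by simp
  assume "PP s m \<le> i"
  moreover have "m \<le> KK s (Suc (PP s m))" unfolding PP_def by (rule LeastI[of _ n]) (rule ex)
  ultimately show "m \<le> KK s (Suc i)" using KK_mono[of "Suc (PP s m)" "Suc i" s] by simp
next
  assume "m \<le> KK s (Suc i)"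
  then show "PP s m \<le> i" unfolding PP_def by (rule Least_le)
qed

lemma PPlt: "1 \<le> m \<Longrightarrow> m < n \<Longrightarrow> PP s m < m"
proof -
  assume m: "1 \<le> m" "m < n"
  then obtain l where l: "m = Suc l" by (cases m) auto
  have "m \<le> KK s m"
  proof (cases "l < jj")
    case True then show ?thesis using KKlow[OF True] l by simp
  next
    case False then show ?thesis using KKhigh[of m] l m by simp
  qed
  then have "PP s m \<le> l" using PPle[OF m(2), of l] l by simp
  then show ?thesis using l by simp
qed

lemma PPmono: "m \<le> m' \<Longrightarrow> m' < n \<Longrightarrow> PP s m \<le> PP s m'"
  using PPle[of m "PP s m'"] PPle[of m' "PP s m'"] by simp

lemma fiber: "{m\<in>{1..<n}. PP s m = i} = {KK s i<..KK s (Suc i)}"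
proof (rule set_eqI, rule iffI)
  fix m assume "m \<in> {m\<in>{1..<n}. PP s m = i}"
  then have m: "1 \<le> m" "m < n" "PP s m = i" by auto
  have "m \<le> KK s (Suc i)" using PPle[OF m(2), of i] m by simp
  moreover have "KK s i < m"
  proof (cases i)
    case 0 then show ?thesis using m unfolding KK_def by simp
  next
    case (Suc i')
    then show ?thesis using PPle[OF m(2), of i'] m by simp
  qed
  ultimately show "m \<in> {KK s i<..KK s (Suc i)}" by simp
next
  fix m assume "m \<in> {KK s i<..KK s (Suc i)}"
  then have m: "KK s i < m" "m \<le> KK s (Suc i)" by auto
  have mn: "1 \<le> m" "m < n" using m KKle[of "Suc i"] npos by auto
  have "PP s m \<le> i" using PPle[OF mn(2)] m by simp
  moreover have "\<not> PP s m < i"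
  proof
    assume "PP s m < i"
    then obtain i' where "i = Suc i'" "PP s m \<le> i'" by (cases i) auto
    then show False using PPle[OF mn(2), of i'] m by simp
  qed
  ultimately show "m \<in> {m\<in>{1..<n}. PP s m = i}" using mn by simp
qed

lemma fiber_card: "card {m\<in>{1..<n}. PP s m = i} = cc s i"
  unfolding fiber using KK_Suc[of s i] by simp

lemma Hf_Suc: "1 \<le> m \<Longrightarrow> m < n \<Longrightarrow> Hf (PP s) m = Hf (PP s) (PP s m) + 1"
  using PPlt by (subst Hf.simps) simp

lemma Hf0: "Hf p 0 = 0" by (subst Hf.simps) simp

lemma Hmono: "m \<le> m' \<Longrightarrow> m' < n \<Longrightarrow> Hf (PP s) m \<le> Hf (PP s) m'"
proof (induction m' arbitrary: m rule: less_induct)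
  case (less m')
  show ?case
  proof (cases "m = 0")
    case True then show ?thesis by (simp add: Hf0)
  next
    case False
    then have m1: "1 \<le> m" "1 \<le> m'" using less.prems by auto
    have "PP s m \<le> PP s m'" using PPmono less.prems by blast
    moreover have "PP s m' < m'" using PPlt m1 less.prems by blast
    ultimately have "Hf (PP s) (PP s m) \<le> Hf (PP s) (PP s m')" using less.IH less.prems by simp
    then show ?thesis using Hf_Suc m1 less.prems by simp
  qed
qed

end



lemma rtranclp_adj_sym: "(adj E)\<^sup>*\<^sup>* a b \<Longrightarrow> (adj E)\<^sup>*\<^sup>* b a"
proof (induction rule: rtranclp.induct)
  case (rtrancl_refl a) then show ?case by simp
next
  case (rtrancl_into_rtrancl a b c)
  have "adj E c b" using rtrancl_into_rtrancl(2) adj_sym by metis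
  then show ?case using rtrancl_into_rtrancl(3) by (rule converse_rtranclp_into_rtranclp)
qed

lemma seqs_of_tree:
  assumes TB: "tree_with_boundary V E"
  shows "seqs (slist (degree_sequence V E)) (card V)"
proof -
  have T: "tree V E" using TB unfolding tree_with_boundary_def by blast
  have g: "graph V E" using T unfolding tree_def by blast
  have fin: "finite V" using g unfolding graph_def by blast
  define s where "s = slist (degree_sequence V E)"
  define n where "n = card V"
  have ms: "mset s = degree_sequence V E" unfolding s_def by (rule slist_props)
  have lens: "length s = n" using arg_cong[OF ms, of size] unfolding degree_sequence_def n_def by simp
  have setS: "set s = deg E ` V" using arg_cong[OF ms, of set_mset] fin unfolding degree_sequence_def by simp
  have degc: "\<And>v. v \<in> V \<Longrightarrow> deg E v = 1 \<or> deg E v \<ge> 2"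
    using TB unfolding tree_with_boundary_def boundary_def interior_def by blast
  have inset: "\<And>i. i < n \<Longrightarrow> s!i \<in> deg E ` V" using setS lens nth_mem by metis
  have ge1: "\<And>i. i < n \<Longrightarrow> s!i \<ge> 1" using inset degc by fastforce
  obtain b where b: "b \<in> V" "deg E b = 1" using TB unfolding tree_with_boundary_def boundary_def by blast
  obtain c where c: "c \<in> V" "deg E c \<ge> 2" using TB unfolding tree_with_boundary_def interior_def by blast
  have has1: "\<exists>i<n. s!i = 1" using b setS lens by (metis imageI in_set_conv_nth)
  have has2: "\<exists>i<n. s!i \<ge> 2" using c setS lens by (metis imageI in_set_conv_nth)
  have "sum_list s = sum_mset (degree_sequence V E)" using ms by (metis sum_mset_sum_list)
  also have "\<dots> = (\<Sum>v\<in>V. deg E v)" unfolding degree_sequence_def by (simp add: sum_unfold_sum_mset)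
  also have "\<dots> = 2 * card E" by (rule handshake[OF g])
  also have "\<dots> = 2 * (n - 1)"
  proof -
    have "card E + 1 = card V" using T unfolding tree_def by blast
    then show ?thesis unfolding n_def by simp
  qed
  finally have sumS: "(\<Sum>i<n. s!i) = 2*(n-1)" using lens by (simp add: sum_list_sum_nth atLeast0LessThan)
  show ?thesis unfolding s_def[symmetric] n_def[symmetric]
    using lens ge1 has1 has2 sumS slist_props(2)[of "degree_sequence V E"] s_def
    by unfold_locales auto
qed



lemma construct:
  assumes SQ: "seqs s n" and fin: "finite V" and cardV: "card V = n"
  shows "\<exists>E1. tree_with_boundary V E1 \<and> degree_sequence V E1 = mset s \<and> SLO_star_tree V E1"
proof -
  interpret seqs s n by (rule SQ)
  obtain h where bijh: "bij_betw h {0..<n} V" using ex_bij_betw_nat_finite[OF fin] cardV by blast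
  define r where "r = inv_into {0..<n} h"
  have injh: "inj_on h {0..<n}" using bijh bij_betw_def by blast
  have bijr: "bij_betw r V {0..<n}" unfolding r_def by (rule bij_betw_inv_into[OF bijh])
  have hV: "\<And>i. i < n \<Longrightarrow> h i \<in> V" using bijh bij_betwE by fastforce
  have rh: "\<And>i. i < n \<Longrightarrow> r (h i) = i" unfolding r_def using injh by simp
  have hr: "\<And>v. v \<in> V \<Longrightarrow> h (r v) = v" unfolding r_def using bij_betw_inv_into_right[OF bijh] by simp
  have rV: "\<And>v. v \<in> V \<Longrightarrow> r v < n" using bijr bij_betwE by fastforce
  have hinj: "\<And>i k. i < n \<Longrightarrow> k < n \<Longrightarrow> h i = h k \<longleftrightarrow> i = k" using injh unfolding inj_on_def by auto
  have Vh: "V = h ` {0..<n}" using bijh bij_betw_imp_surj_on by metis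
  have PPn: "\<And>m. 1 \<le> m \<Longrightarrow> m < n \<Longrightarrow> PP s m < n" using PPlt by fastforce
  define E1 where "E1 = (\<lambda>m. {h m, h (PP s m)}) ` {1..<n}"
  have edgeiff: "{h i, h k} \<in> E1 \<longleftrightarrow> (1 \<le> i \<and> k = PP s i) \<or> (1 \<le> k \<and> i = PP s k)"
    if ik: "i < n" "k < n" for i k
  proof
    assume "{h i, h k} \<in> E1"
    then obtain m where m: "1 \<le> m" "m < n" "{h i, h k} = {h m, h (PP s m)}" unfolding E1_def by auto
    have pm: "PP s m < n" using PPn m by blast
    from m(3) have "(h i = h m \<and> h k = h (PP s m)) \<or> (h i = h (PP s m) \<and> h k = h m)"
      by (simp add: doubleton_eq_iff)
    then have "(i = m \<and> k = PP s m) \<or> (i = PP s m \<and> k = m)" using hinj ik m pm by simp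
    then show "(1 \<le> i \<and> k = PP s i) \<or> (1 \<le> k \<and> i = PP s k)" using m by auto
  next
    assume "(1 \<le> i \<and> k = PP s i) \<or> (1 \<le> k \<and> i = PP s k)"
    then show "{h i, h k} \<in> E1" unfolding E1_def using ik by (auto simp: insert_commute)
  qed
  have gr: "graph V E1"
    unfolding graph_def
  proof (rule conjI[OF fin], rule ballI)
    fix e assume "e \<in> E1"
    then obtain m where m: "1 \<le> m" "m < n" "e = {h m, h (PP s m)}" unfolding E1_def by auto
    have "PP s m < m" using PPlt m by blast
    then have "h m \<noteq> h (PP s m)" using hinj m by simp
    then show "e \<subseteq> V \<and> card e = 2" using m hV PPn by auto
  qed
  have cardE: "card E1 = n - 1"
  proof -
    have "inj_on (\<lambda>m. {h m, h (PP s m)}) {1..<n}"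
    proof (rule inj_onI)
      fix m m' assume m: "m \<in> {1..<n}" "m' \<in> {1..<n}" "{h m, h (PP s m)} = {h m', h (PP s m')}"
      have l: "PP s m < m" "PP s m' < m'" using PPlt m by auto
      from m(3) have "(h m = h m' \<and> h (PP s m) = h (PP s m')) \<or> (h m = h (PP s m') \<and> h (PP s m) = h m')"
        by (simp add: doubleton_eq_iff)
      then have "m = m' \<or> (m = PP s m' \<and> PP s m = m')" using hinj m l by auto
      then show "m = m'" using l by auto
    qed
    then show ?thesis unfolding E1_def by (simp add: card_image)
  qed
  have adjE: "adj E1 (h (PP s i)) (h i)" if "1 \<le> i" "i < n" for i
    unfolding adj_def using edgeiff[OF PPn[OF that] that(2)] that by simp
  have reach: "(adj E1)\<^sup>*\<^sup>* (h 0) (h i)" if "i < n" for i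
    using that
  proof (induction i rule: less_induct)
    case (less i)
    show ?case
    proof (cases "i = 0")
      case True then show ?thesis by simp
    next
      case False
      then have i1: "1 \<le> i" by simp
      have "(adj E1)\<^sup>*\<^sup>* (h 0) (h (PP s i))" using less.IH PPlt[OF i1 less.prems] less.prems by simp
      then show ?thesis using adjE[OF i1 less.prems] by (rule rtranclp.rtrancl_into_rtrancl)
    qed
  qed
  have conn: "connected_graph V E1"
    unfolding connected_graph_def
  proof (intro conjI ballI)
    have "h 0 \<in> V" using hV npos by simp
    then show "V \<noteq> {}" by blast
    fix x y assume "x \<in> V" "y \<in> V"
    then have "(adj E1)\<^sup>*\<^sup>* (h 0) x" "(adj E1)\<^sup>*\<^sup>* (h 0) y" using reach hr rV by metis+
    then show "(adj E1)\<^sup>*\<^sup>* x y" using rtranclp_adj_sym rtranclp_trans by metis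
  qed
  have tr: "tree V E1" unfolding tree_def using gr conn cardE cardV npos by simp
  have degh: "deg E1 (h i) = s!i" if i: "i < n" for i
  proof -
    let ?f = "\<lambda>m. {h m, h (PP s m)}"
    let ?S = "{m\<in>{1..<n}. m = i \<or> PP s m = i}"
    have "{e\<in>E1. h i \<in> e} = ?f ` ?S"
    proof (rule set_eqI, rule iffI)
      fix e assume "e \<in> {e\<in>E1. h i \<in> e}"
      then obtain m where m: "1 \<le> m" "m < n" "e = ?f m" "h i \<in> e" unfolding E1_def by auto
      then have "i = m \<or> i = PP s m" using hinj i PPn by auto
      then show "e \<in> ?f ` ?S" using m by auto
    next
      fix e assume "e \<in> ?f ` ?S"
      then show "e \<in> {e\<in>E1. h i \<in> e}" unfolding E1_def by auto
    qed
    moreover have "inj_on ?f ?S"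
    proof (rule inj_onI)
      fix m m' assume m: "m \<in> ?S" "m' \<in> ?S" "?f m = ?f m'"
      have l: "PP s m < m" "PP s m' < m'" using PPlt m by auto
      from m(3) have "(h m = h m' \<and> h (PP s m) = h (PP s m')) \<or> (h m = h (PP s m') \<and> h (PP s m) = h m')"
        by (simp add: doubleton_eq_iff)
      then have "m = m' \<or> (m = PP s m' \<and> PP s m = m')" using hinj m l by auto
      then show "m = m'" using l by auto
    qed
    ultimately have "deg E1 (h i) = card ?S" unfolding deg_def by (simp add: card_image)
    also have "?S = {m\<in>{1..<n}. PP s m = i} \<union> (if 1 \<le> i then {i} else {})" using i by auto
    also have "card \<dots> = cc s i + (if 1 \<le> i then 1 else 0)"
    proof (cases "1 \<le> i")
      case True
      have "i \<notin> {m\<in>{1..<n}. PP s m = i}" using PPlt[OF True i] by auto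
      then show ?thesis using True fiber_card[of i] by simp
    next
      case False then show ?thesis using fiber_card[of i] by simp
    qed
    also have "\<dots> = s!i" using ge1[OF i] i lens unfolding cc_def by (cases i) auto
    finally show ?thesis .
  qed
  have degv: "deg E1 v = s ! r v" if "v \<in> V" for v using degh[OF rV[OF that]] hr[OF that] by simp
  have dseq: "degree_sequence V E1 = mset s"
  proof -
    have "degree_sequence V E1 = image_mset (deg E1) (image_mset h (mset_set {0..<n}))"
      unfolding degree_sequence_def Vh image_mset_mset_set[OF injh] ..
    also have "\<dots> = image_mset (\<lambda>i. deg E1 (h i)) (mset_set {0..<n})" by (simp add: multiset.map_comp o_def)
    also have "\<dots> = image_mset (\<lambda>i. s ! i) (mset_set {0..<n})"
      by (rule image_mset_cong) (use degh in auto)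
    also have "\<dots> = mset (map (\<lambda>i. s ! i) [0..<n])" by simp
    also have "\<dots> = mset s" using map_nth[of s] lens by simp
    finally show ?thesis .
  qed
  have bnd: "boundary V E1 \<noteq> {}"
  proof -
    have "h jj \<in> V" "deg E1 (h jj) = 1" using hV degh jj by auto
    then show ?thesis unfolding boundary_def by blast
  qed
  have intr: "h 0 \<in> interior V E1" using hV degh s0 npos unfolding interior_def by auto
  have TB: "tree_with_boundary V E1"
    unfolding tree_with_boundary_def
  proof (intro conjI tr bnd)
    show "interior V E1 \<noteq> {}" using intr by blast
    show "V = boundary V E1 \<union> interior V E1"
    proof
      show "V \<subseteq> boundary V E1 \<union> interior V E1"
      proof
        fix v assume v: "v \<in> V"
        then have "s ! r v \<ge> 1" using ge1 rV by blast
        then show "v \<in> boundary V E1 \<union> interior V E1"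
          using degv[OF v] v unfolding boundary_def interior_def by auto
      qed
    qed (auto simp: boundary_def interior_def)
  qed
  define g where "g v = Hf (PP s) (r v)" for v
  have v0: "h 0 \<in> V" using hV npos by simp
  have adjcase: "(1 \<le> r x \<and> r y = PP s (r x)) \<or> (1 \<le> r y \<and> r x = PP s (r y))"
    if "adj E1 x y" for x y
  proof -
    have xy: "x \<in> V" "y \<in> V" using adj_in[OF gr that] by auto
    have "{h (r x), h (r y)} \<in> E1" using that hr xy unfolding adj_def by simp
    then show ?thesis using edgeiff[OF rV[OF xy(1)] rV[OF xy(2)]] by simp
  qed
  have ht: "height E1 (h 0) v = g v" if "v \<in> V" for v
  proof (rule height_eq[OF gr v0 _ _ _ that])
    show "g (h 0) = 0" unfolding g_def using rh npos by (simp add: Hf0)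
    fix x y assume a: "adj E1 x y"
    have xy: "x \<in> V" "y \<in> V" using adj_in[OF gr a] by auto
    show "g y \<le> g x + 1"
      using adjcase[OF a] Hf_Suc[OF _ rV[OF xy(1)]] Hf_Suc[OF _ rV[OF xy(2)]] unfolding g_def by auto
  next
    fix v assume v: "v \<in> V" "v \<noteq> h 0"
    then have r1: "1 \<le> r v" using hr by (metis less_one not_le)
    have "adj E1 (h (PP s (r v))) v" using adjE[OF r1 rV[OF v(1)]] hr[OF v(1)] by simp
    moreover have "g v = g (h (PP s (r v))) + 1"
      unfolding g_def using rh[OF PPn[OF r1 rV[OF v(1)]]] Hf_Suc[OF r1 rV[OF v(1)]] by simp
    ultimately show "\<exists>u. adj E1 u v \<and> g v = g u + 1" by blast
  qed
  have childc: "r x = PP s (r y) \<and> 1 \<le> r y" if c: "child E1 (h 0) x y" for x y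
  proof -
    have a: "adj E1 x y" and hh: "height E1 (h 0) y = height E1 (h 0) x + 1" using c unfolding child_def by auto
    have xy: "x \<in> V" "y \<in> V" using adj_in[OF gr a] by auto
    have "\<not> (1 \<le> r x \<and> r y = PP s (r x))"
    proof
      assume "1 \<le> r x \<and> r y = PP s (r x)"
      then have "g x = g y + 1" unfolding g_def using Hf_Suc rV[OF xy(1)] by simp
      then show False using hh ht xy by simp
    qed
    then show ?thesis using adjcase[OF a] by blast
  qed
  define prec where "prec x y = (r x < r y)" for x y
  have SL: "SLO_star V E1 (h 0) prec"
    unfolding SLO_star_def SLO_def
  proof (intro conjI ballI impI v0)
    show "strict_total_order_on V prec"
      unfolding strict_total_order_on_def prec_def
      using hr by (metis less_irrefl less_trans nat_neq_iff)
  next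
    fix v w assume vw: "v \<in> V" "w \<in> V" "prec v w"
    show "height E1 (h 0) v \<le> height E1 (h 0) w"
      using ht vw Hmono[of "r v" "r w"] rV unfolding prec_def g_def by simp
  next
    fix v1 v2 w1 w2 assume a: "v1 \<in> V" "v2 \<in> V" "prec v1 v2" "w1 \<in> V" "w2 \<in> V"
      "child E1 (h 0) v1 w1" "child E1 (h 0) v2 w2"
    have c1: "r v1 = PP s (r w1)" and c2: "r v2 = PP s (r w2)" using childc a(6,7) by auto
    show "prec w1 w2"
    proof (rule ccontr)
      assume "\<not> prec w1 w2"
      then have "r w2 \<le> r w1" unfolding prec_def by simp
      then have "PP s (r w2) \<le> PP s (r w1)" using PPmono rV a by blast
      then show False using a(3) c1 c2 unfolding prec_def by simp
    qed
  next
    fix v w assume a: "v \<in> V" "w \<in> V" "prec v w" "v \<in> boundary V E1"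
    have "s ! r v = 1" using a degv unfolding boundary_def by simp
    then have "jj \<le> r v" using below_jj by (metis not_le numeral_le_one_iff semiring_norm(69))
    then have "s ! r w = 1" using above_jj a rV unfolding prec_def by simp
    then show "w \<in> boundary V E1" using a degv unfolding boundary_def by simp
  next
    fix v w assume a: "v \<in> interior V E1" "w \<in> interior V E1" "prec v w"
    have d: "s ! r v \<ge> 2" "s ! r w \<ge> 2" using a degv unfolding interior_def by auto
    have "key (s ! r v) \<le> key (s ! r w)" using keyle a rV unfolding prec_def interior_def by simp
    then have "s ! r v \<le> s ! r w" using d by (simp add: key_def less_eq_prod_def)
    then show "deg E1 v \<le> deg E1 w" using a degv unfolding interior_def by simp
  qed
  show ?thesis using TB dseq SL unfolding SLO_star_tree_def by blast
qed



theorem lemma2: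
  fixes V :: "'a set" and E :: "'a set set" and \<pi> :: "nat multiset"
  assumes "tree_with_boundary V E" and "degree_sequence V E = \<pi>"
  shows "(\<exists>(V1 :: 'a set) (E1 :: 'a set set).
            tree_with_boundary V1 E1 \<and> degree_sequence V1 E1 = \<pi> \<and> SLO_star_tree V1 E1)
       \<and> (\<forall>(V1 :: 'b set) (E1 :: 'b set set) (V2 :: 'c set) (E2 :: 'c set set).
            tree_with_boundary V1 E1 \<and> degree_sequence V1 E1 = \<pi> \<and> SLO_star_tree V1 E1 \<and>
            tree_with_boundary V2 E2 \<and> degree_sequence V2 E2 = \<pi> \<and> SLO_star_tree V2 E2
            \<longrightarrow> graph_iso V1 E1 V2 E2)"
proof (intro conjI allI impI)
  have SQ: "seqs (slist \<pi>) (card V)" using seqs_of_tree[OF assms(1)] assms(2) by simp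
  have fin: "finite V" using assms(1) unfolding tree_with_boundary_def tree_def graph_def by blast
  obtain E1 where "tree_with_boundary V E1 \<and> degree_sequence V E1 = mset (slist \<pi>) \<and> SLO_star_tree V E1"
    using construct[OF SQ fin refl] by blast
  then show "\<exists>(V1 :: 'a set) (E1 :: 'a set set).
            tree_with_boundary V1 E1 \<and> degree_sequence V1 E1 = \<pi> \<and> SLO_star_tree V1 E1"
    using slist_props(1)[of \<pi>] by auto
next
  fix V1 :: "'b set" and E1 :: "'b set set" and V2 :: "'c set" and E2 :: "'c set set"
  assume a: "tree_with_boundary V1 E1 \<and> degree_sequence V1 E1 = \<pi> \<and> SLO_star_tree V1 E1 \<and>
            tree_with_boundary V2 E2 \<and> degree_sequence V2 E2 = \<pi> \<and> SLO_star_tree V2 E2"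
  obtain v1 p1 where s1: "SLO_star V1 E1 v1 p1" using a unfolding SLO_star_tree_def by blast
  obtain v2 p2 where s2: "SLO_star V2 E2 v2 p2" using a unfolding SLO_star_tree_def by blast
  obtain r1 where r1: "bij_betw r1 V1 {0..<card V1}" and
    c1: "\<forall>x\<in>V1. \<forall>y\<in>V1. {x,y} \<in> E1 \<longleftrightarrow> (r1 y \<noteq> 0 \<and> r1 x = PP (slist \<pi>) (r1 y)) \<or> (r1 x \<noteq> 0 \<and> r1 y = PP (slist \<pi>) (r1 x))"
    using uniq_main[of V1 E1 v1 p1] a s1 by auto
  obtain r2 where r2: "bij_betw r2 V2 {0..<card V2}" and
    c2: "\<forall>x\<in>V2. \<forall>y\<in>V2. {x,y} \<in> E2 \<longleftrightarrow> (r2 y \<noteq> 0 \<and> r2 x = PP (slist \<pi>) (r2 y)) \<or> (r2 x \<noteq> 0 \<and> r2 y = PP (slist \<pi>) (r2 x))"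
    using uniq_main[of V2 E2 v2 p2] a s2 by auto
  have sz: "size (degree_sequence V E) = card V" for V :: "'d set" and E
    by (simp add: degree_sequence_def)
  have cc: "card V1 = card V2" using sz[of V1 E1] sz[of V2 E2] a by simp
  define f where "f = inv_into V2 r2 \<circ> r1"
  have bf: "bij_betw f V1 V2" unfolding f_def
    by (rule bij_betw_trans[OF r1]) (use bij_betw_inv_into[OF r2] cc in simp)
  have rf: "r2 (f x) = r1 x" if "x \<in> V1" for x
  proof -
    have "r1 x \<in> {0..<card V2}" using r1 that cc bij_betwE by fastforce
    then show ?thesis unfolding f_def using bij_betw_inv_into_right[OF r2] by simp
  qed
  have fV: "f x \<in> V2" if "x \<in> V1" for x using bf that bij_betwE by blast
  show "graph_iso V1 E1 V2 E2"
    unfolding graph_iso_def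
  proof (intro exI conjI ballI)
    show "bij_betw f V1 V2" by (rule bf)
    fix x y assume xy: "x \<in> V1" "y \<in> V1"
    show "{x, y} \<in> E1 \<longleftrightarrow> {f x, f y} \<in> E2"
      using c1 c2 xy fV rf by simp
  qed
qed

end
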